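(* Let $\Lambda\subset H^0(\mathbb{P}^r,\mathcal{O}_{\mathbb{P}^r}(2))$ be a linear system of quadrics with $\dim\Lambda=\alpha+1$, let $\Phi:\mathbb{P}^r\dashrightarrow\mathbb{P}^\alpha$ be the associated rational map, and let $X$ be the base scheme of $\Lambda$. Let $W\subset G(1,r)$ be the Zariski closure of the set of lines $L\subset\mathbb{P}^r$ with $L\cap X=\emptyset$ for which $\Phi_{|L}:L\to\Phi(L)$ is a double covering of a line. Then $W=\emptyset$ if and only if all fibres of $\Phi$ are linear spaces.
   Context: Over $\mathbb{C}$. The fibre of $\Phi$ through $P\in\mathbb{P}^r\setminus X$ means the Zariski closure $\overline{\Phi^{-1}(\Phi(P))}$. $G(1,r)$ is the Grassmannian of lines in $\mathbb{P}^r$. *)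

theory Defs
  imports "HOL-Analysis.Analysis"
begin

text \<open>Points of P^r are represented by nonzero vectors of complex^'n (CARD('n) = r+1);
  all linear algebra is complex-linear (the vec interpretation with scaling (*s)).\<close>

definition qf :: "complex^'n^'n \<Rightarrow> complex^'n \<Rightarrow> complex" where
  "qf A x = (\<Sum>i\<in>UNIV. \<Sum>j\<in>UNIV. A$i$j * x$i * x$j)"

text \<open>The rational map Phi given by a basis Q of the linear system (affine cone version).\<close>
definition qmap :: "('m::finite \<Rightarrow> complex^'n^'n) \<Rightarrow> complex^'n \<Rightarrow> complex^'m" where
  "qmap Q x = (\<chi> k. qf (Q k) x)"

text \<open>The quadrics Q k are linearly independent (so the system has vector dimension CARD('m)).\<close>
definition qf_independent :: "('m::finite \<Rightarrow> complex^'n^'n) \<Rightarrow> bool" where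
  "qf_independent Q \<longleftrightarrow>
     (\<forall>c::'m \<Rightarrow> complex. (\<forall>x. (\<Sum>k\<in>UNIV. c k * qf (Q k) x) = 0) \<longrightarrow> (\<forall>k. c k = 0))"

text \<open>Affine cone over the base locus X.\<close>
definition base_cone :: "('m::finite \<Rightarrow> complex^'n^'n) \<Rightarrow> (complex^'n) set" where
  "base_cone Q = {x. \<forall>k. qf (Q k) x = 0}"

definition proj_pts :: "(('a::field)^'k) set \<Rightarrow> (('a^'k) set) set" where
  "proj_pts S = (\<lambda>x. vec.span {x}) ` (S - {0})"

definition hom_poly :: "nat \<Rightarrow> (complex^'n \<Rightarrow> complex) \<Rightarrow> bool" where
  "hom_poly d f \<longleftrightarrow> (\<exists>M c. finite M \<and> (\<forall>m\<in>M. (\<Sum>i\<in>UNIV. m i) = d) \<and>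
       f = (\<lambda>x. \<Sum>m\<in>M. c m * (\<Prod>i\<in>UNIV. x$i ^ m i)))"

text \<open>Zariski closure in P^r of a cone S (as the affine cone of the closure).\<close>
definition zar_closure :: "(complex^'n) set \<Rightarrow> (complex^'n) set" where
  "zar_closure S = {x. \<forall>d f. hom_poly d f \<and> (\<forall>y\<in>S. f y = 0) \<longrightarrow> f x = 0}"

definition fibre :: "('m::finite \<Rightarrow> complex^'n^'n) \<Rightarrow> complex^'n \<Rightarrow> (complex^'n) set" where
  "fibre Q P = zar_closure
     {x. x \<noteq> 0 \<and> x \<notin> base_cone Q \<and> vec.span {qmap Q x} = vec.span {qmap Q P}}"

text \<open>Lines of P^r = 2-dimensional linear subspaces of complex^'n.\<close>
definition is_line :: "(complex^'n) set \<Rightarrow> bool" where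
  "is_line L \<longleftrightarrow> vec.subspace L \<and> vec.dim L = 2"

text \<open>Phi restricted to L is a double covering of a line: the image Phi(L) spans a
  projective line, and over all but finitely many points of Phi(L) the fibre of Phi|L
  consists of exactly two points.\<close>
definition double_cover_line :: "('m::finite \<Rightarrow> complex^'n^'n) \<Rightarrow> (complex^'n) set \<Rightarrow> bool" where
  "double_cover_line Q L \<longleftrightarrow>
     vec.dim (vec.span (qmap Q ` L)) = 2 \<and>
     finite {y \<in> proj_pts (qmap Q ` L).
        card (proj_pts {x \<in> L. x \<noteq> 0 \<and> vec.span {qmap Q x} = y}) \<noteq> 2}"

definition W_lines :: "('m::finite \<Rightarrow> complex^'n^'n) \<Rightarrow> (complex^'n) set set" where
  "W_lines Q = {L. is_line L \<and> L \<inter> base_cone Q = {0} \<and> double_cover_line Q L}"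

end

theory Submission
  imports Defs "HOL-Computational_Algebra.Polynomial"
begin


definition bil :: "complex^'n^'n \<Rightarrow> complex^'n \<Rightarrow> complex^'n \<Rightarrow> complex" where
  "bil A x y = (\<Sum>i\<in>UNIV. \<Sum>j\<in>UNIV. A$i$j * (x$i * y$j + y$i * x$j))"

definition bv :: "('m::finite \<Rightarrow> complex^'n^'n) \<Rightarrow> complex^'n \<Rightarrow> complex^'n \<Rightarrow> complex^'m" where
  "bv Q x y = (\<chi> k. bil (Q k) x y)"

lemma qf_lin: "qf A (s *s x + t *s y) = s^2 * qf A x + (s*t) * bil A x y + t^2 * qf A y"
proof -
  have "qf A (s *s x + t *s y) = (\<Sum>i\<in>UNIV. \<Sum>j\<in>UNIV. s^2 * (A$i$j * x$i * x$j) + (s*t) * (A$i$j * (x$i * y$j + y$i * x$j)) + t^2 * (A$i$j * y$i * y$j))"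
    unfolding qf_def by (intro sum.cong refl) (simp add: algebra_simps power2_eq_square)
  also have "\<dots> = s^2 * qf A x + (s*t) * bil A x y + t^2 * qf A y"
    unfolding qf_def bil_def by (simp add: sum.distrib sum_distrib_left)
  finally show ?thesis .
qed

lemma qf_scale: "qf A (c *s x) = c^2 * qf A x"
  using qf_lin[of A c x 0 x] by simp

lemma qf_zero[simp]: "qf A 0 = 0"
  using qf_scale[of A 0 0] by simp

lemma qmap_lin: "qmap Q (s *s x + t *s y) = s^2 *s qmap Q x + (s*t) *s bv Q x y + t^2 *s qmap Q y"
  by (simp add: vec_eq_iff qmap_def bv_def qf_lin)

lemma qmap_scale: "qmap Q (c *s x) = c^2 *s qmap Q x"
  by (simp add: vec_eq_iff qmap_def qf_scale)

lemma qmap_zero[simp]: "qmap Q 0 = 0"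
  by (simp add: vec_eq_iff qmap_def)

lemma base_cone_iff: "x \<in> base_cone Q \<longleftrightarrow> qmap Q x = 0"
  by (simp add: base_cone_def qmap_def vec_eq_iff)

lemma zero_base[simp]: "0 \<in> base_cone Q"
  by (simp add: base_cone_iff)

lemma hom_poly_zero: "hom_poly d (\<lambda>x. 0)"
  unfolding hom_poly_def by (rule exI[of _ "{}"]) auto

lemma hom_poly_scale: "hom_poly d f \<Longrightarrow> hom_poly d (\<lambda>x. a * f x)"
  unfolding hom_poly_def
  apply (elim exE conjE)
  subgoal for M c
    apply (rule exI[of _ M], rule exI[of _ "\<lambda>m. a * c m"])
    by (auto simp: sum_distrib_left mult.assoc)
  done

lemma hom_poly_add:
  assumes "hom_poly d f" "hom_poly d g"
  shows "hom_poly d (\<lambda>x. f x + g x)"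
proof -
  obtain M1 c1 where 1: "finite M1" "\<forall>m\<in>M1. (\<Sum>i\<in>UNIV. m i) = d"
     "f = (\<lambda>x. \<Sum>m\<in>M1. c1 m * (\<Prod>i\<in>UNIV. x$i ^ m i))" using assms(1) unfolding hom_poly_def by blast
  obtain M2 c2 where 2: "finite M2" "\<forall>m\<in>M2. (\<Sum>i\<in>UNIV. m i) = d"
     "g = (\<lambda>x. \<Sum>m\<in>M2. c2 m * (\<Prod>i\<in>UNIV. x$i ^ m i))" using assms(2) unfolding hom_poly_def by blast
  define c where "c m = (if m \<in> M1 then c1 m else 0) + (if m \<in> M2 then c2 m else 0)" for m
  have "(\<lambda>x. f x + g x) = (\<lambda>x. \<Sum>m\<in>M1 \<union> M2. c m * (\<Prod>i\<in>UNIV. x$i ^ m i))"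
  proof
    fix x :: "complex^'a"
    let ?p = "\<lambda>m. (\<Prod>i\<in>UNIV. x$i ^ m i)"
    have a: "(\<Sum>m\<in>M1 \<union> M2. (if m \<in> M1 then c1 m * ?p m else 0)) = (\<Sum>m\<in>M1. c1 m * ?p m)"
      using 1(1) 2(1) by (subst sum.mono_neutral_right[of "M1 \<union> M2" M1]) auto
    have b: "(\<Sum>m\<in>M1 \<union> M2. (if m \<in> M2 then c2 m * ?p m else 0)) = (\<Sum>m\<in>M2. c2 m * ?p m)"
      using 1(1) 2(1) by (subst sum.mono_neutral_right[of "M1 \<union> M2" M2]) auto
    have "(\<Sum>m\<in>M1 \<union> M2. c m * ?p m) = (\<Sum>m\<in>M1 \<union> M2. (if m \<in> M1 then c1 m * ?p m else 0) + (if m \<in> M2 then c2 m * ?p m else 0))"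
      by (intro sum.cong refl) (simp add: c_def distrib_right)
    also have "\<dots> = (\<Sum>m\<in>M1. c1 m * ?p m) + (\<Sum>m\<in>M2. c2 m * ?p m)"
      by (simp add: sum.distrib a b)
    finally show "f x + g x = (\<Sum>m\<in>M1 \<union> M2. c m * ?p m)" using 1(3) 2(3) by simp
  qed
  then show ?thesis unfolding hom_poly_def using 1 2 by (intro exI[of _ "M1 \<union> M2"] exI[of _ c]) auto
qed

lemma hom_poly_sum:
  assumes "finite I" "\<And>i. i \<in> I \<Longrightarrow> hom_poly d (f i)"
  shows "hom_poly d (\<lambda>x. \<Sum>i\<in>I. f i x)"
  using assms
proof (induction I rule: finite_induct)
  case empty then show ?case by (simp add: hom_poly_zero)
next
  case (insert a I)
  then show ?case using hom_poly_add[of d "f a" "\<lambda>x. \<Sum>i\<in>I. f i x"] by simp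
qed

lemma hom_poly_mono2: "hom_poly 2 (\<lambda>x::complex^'n. x$i * x$j)"
proof -
  define m where "m k = (if k = i then 1 else 0) + (if k = j then 1 else (0::nat))" for k
  have s: "(\<Sum>k\<in>UNIV. m k) = 2" by (simp add: m_def sum.distrib)
  have p: "(\<Prod>k\<in>UNIV. x$k ^ m k) = x$i * x$j" for x :: "complex^'n"
  proof -
    have "(\<Prod>k\<in>UNIV. x$k ^ m k) = (\<Prod>k\<in>UNIV. (if k = i then x$k else 1) * (if k = j then x$k else 1))"
      by (intro prod.cong refl) (simp add: m_def power_add)
    also have "\<dots> = x$i * x$j" by (simp add: prod.distrib)
    finally show ?thesis .
  qed
  show ?thesis unfolding hom_poly_def
    by (rule exI[of _ "{m}"], rule exI[of _ "\<lambda>_. 1"]) (simp add: s p)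
qed

lemma hom_poly_mono1: "hom_poly 1 (\<lambda>x::complex^'n. x$i)"
proof -
  define m where "m k = (if k = i then 1 else (0::nat))" for k
  have s: "(\<Sum>k\<in>UNIV. m k) = 1" by (simp add: m_def)
  have p: "(\<Prod>k\<in>UNIV. x$k ^ m k) = x$i" for x :: "complex^'n"
  proof -
    have "(\<Prod>k\<in>UNIV. x$k ^ m k) = (\<Prod>k\<in>UNIV. (if k = i then x$k else 1))"
      by (intro prod.cong refl) (simp add: m_def)
    also have "\<dots> = x$i" by simp
    finally show ?thesis .
  qed
  show ?thesis unfolding hom_poly_def
    by (rule exI[of _ "{m}"], rule exI[of _ "\<lambda>_. 1"]) (simp add: s p)
qed

lemma hom_poly_qf: "hom_poly 2 (qf A)"
proof -
  have "qf A = (\<lambda>x. \<Sum>i\<in>UNIV. \<Sum>j\<in>UNIV. A$i$j * (x$i * x$j))"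
    by (auto simp: qf_def mult.assoc)
  then show ?thesis
    by (simp add: hom_poly_sum hom_poly_scale hom_poly_mono2)
qed

lemma hom_poly_hom:
  assumes "hom_poly d f" shows "f (c *s x) = c^d * f x"
proof -
  obtain M cc where 1: "finite M" "\<forall>m\<in>M. (\<Sum>i\<in>UNIV. m i) = d"
     "f = (\<lambda>x. \<Sum>m\<in>M. cc m * (\<Prod>i\<in>UNIV. x$i ^ m i))" using assms unfolding hom_poly_def by blast
  have "f (c *s x) = (\<Sum>m\<in>M. cc m * (c ^ (\<Sum>i\<in>UNIV. m i) * (\<Prod>i\<in>UNIV. x$i ^ m i)))"
    unfolding 1(3)
    by (intro sum.cong refl) (simp add: power_mult_distrib prod.distrib power_sum)
  also have "\<dots> = c^d * f x" unfolding 1(3) using 1(2)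
    by (simp add: sum_distrib_left algebra_simps)
  finally show ?thesis .
qed

lemma hom_poly_at0:
  assumes "hom_poly d f" "f P = 0" shows "f 0 = 0"
  using hom_poly_hom[OF assms(1), of 0 P] assms(2) by simp

lemma hom_poly_line:
  assumes "hom_poly d f" shows "\<exists>p. \<forall>s. f (x + s *s y) = poly p s"
proof -
  obtain M cc where 1: "finite M" 
     "f = (\<lambda>x. \<Sum>m\<in>M. cc m * (\<Prod>i\<in>UNIV. x$i ^ m i))" using assms unfolding hom_poly_def by blast
  define p where "p = (\<Sum>m\<in>M. [:cc m:] * (\<Prod>i\<in>UNIV. [:x$i, y$i:] ^ m i))"
  have "f (x + s *s y) = poly p s" for s
    unfolding 1(2) p_def by (simp add: poly_sum poly_prod algebra_simps)
  then show ?thesis by blast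
qed

lemma hom_poly_dense:
  assumes "hom_poly d f" "finite E" "\<And>s. s \<notin> E \<Longrightarrow> f (x + s *s y) = 0"
  shows "f x = 0"
proof -
  obtain p where p: "\<And>s. f (x + s *s y) = poly p s" using hom_poly_line[OF assms(1)] by blast
  have "p = 0"
  proof (rule ccontr)
    assume "p \<noteq> 0"
    then have "finite {s. poly p s = 0}" by (rule poly_roots_finite)
    moreover have "UNIV \<subseteq> E \<union> {s. poly p s = 0}" using assms(3) p by auto
    ultimately have "finite (UNIV :: complex set)" using assms(2) by (meson finite_UnI finite_subset)
    then show False using infinite_UNIV_char_0 by blast
  qed
  then show ?thesis using p[of 0] by simp
qed

lemma finite_line_base:
  assumes "y \<notin> base_cone Q" shows "finite {s. x + s *s y \<in> base_cone Q}"
proof -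
  obtain k where k: "qf (Q k) y \<noteq> 0" using assms by (auto simp: base_cone_def)
  have "{s. x + s *s y \<in> base_cone Q} \<subseteq> {s. poly [:qf (Q k) x, bil (Q k) x y, qf (Q k) y:] s = 0}"
  proof
    fix s assume "s \<in> {s. x + s *s y \<in> base_cone Q}"
    then have "qf (Q k) (1 *s x + s *s y) = 0" by (simp add: base_cone_def)
    then have "1^2 * qf (Q k) x + (1 * s) * bil (Q k) x y + s^2 * qf (Q k) y = 0" by (simp only: qf_lin)
    then show "s \<in> {s. poly [:qf (Q k) x, bil (Q k) x y, qf (Q k) y:] s = 0}"
      by (simp add: algebra_simps power2_eq_square)
  qed
  moreover have "finite {s. poly [:qf (Q k) x, bil (Q k) x y, qf (Q k) y:] s = 0}"
    using k by (intro poly_roots_finite) auto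
  ultimately show ?thesis by (rule finite_subset)
qed



lemma qmap_nth[simp]: "qmap Q y $ k = qf (Q k) y"
  by (simp add: qmap_def)

lemma span_scale_eq: "(c::'a::field) \<noteq> 0 \<Longrightarrow> vec.span {c *s a} = vec.span {a::'a^'k}"
proof -
  assume c: "c \<noteq> 0"
  have 1: "range (\<lambda>k. k *s a) \<subseteq> range (\<lambda>k. k *s (c *s a))"
  proof
    fix y assume "y \<in> range (\<lambda>k. k *s a)"
    then obtain k where "y = k *s a" by auto
    also have "\<dots> = (k / c) *s (c *s a)" using c by (simp add: vector_smult_assoc)
    finally show "y \<in> range (\<lambda>k. k *s (c *s a))" by blast
  qed
  have "k *s (c *s a) = (k * c) *s a" for k by (simp add: vector_smult_assoc)
  then have 2: "range (\<lambda>k. k *s (c *s a)) \<subseteq> range (\<lambda>k. k *s a)" by auto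
  show ?thesis unfolding vec.span_singleton using 1 2 by blast
qed

lemma span_sing_eq:
  assumes "(a::'a::field^'k) \<noteq> 0" "b \<noteq> 0"
  shows "vec.span {a} = vec.span {b} \<longleftrightarrow> (\<exists>c. c \<noteq> 0 \<and> a = c *s b)"
proof
  assume "vec.span {a} = vec.span {b}"
  then have "a \<in> vec.span {b}" by (metis insertI1 vec.span_base)
  then obtain c where "a = c *s b" by (auto simp: vec.span_singleton)
  with assms show "\<exists>c. c \<noteq> 0 \<and> a = c *s b" by (intro exI[of _ c]) auto
next
  assume "\<exists>c. c \<noteq> 0 \<and> a = c *s b"
  then show "vec.span {a} = vec.span {b}" using span_scale_eq by blast
qed

lemma span2: "x \<in> vec.span {u, v} \<longleftrightarrow> (\<exists>s t. x = s *s u + t *s v)"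
proof
  assume "x \<in> vec.span {u, v}"
  then obtain s where "x - s *s u \<in> vec.span {v}" by (auto simp: vec.span_insert)
  then obtain t where "x - s *s u = t *s v" by (auto simp: vec.span_singleton)
  then show "\<exists>s t. x = s *s u + t *s v" by (metis diff_add_cancel add.commute)
next
  assume "\<exists>s t. x = s *s u + t *s v"
  then obtain s t where x: "x = s *s u + t *s v" by blast
  have "u \<in> vec.span {u, v}" "v \<in> vec.span {u, v}" by (auto intro: vec.span_base)
  then show "x \<in> vec.span {u, v}" unfolding x
    by (intro vec.span_add vec.span_scale)
qed

lemma indep2:
  assumes "v \<notin> vec.span {u}" "u \<noteq> 0" "s *s u + t *s v = (0::'a::field^'k)"
  shows "s = 0 \<and> t = 0"
proof -
  have "t = 0"
  proof (rule ccontr)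
    assume t: "t \<noteq> 0"
    have "v = (- s / t) *s u" using assms(3) t
      by (simp add: vec_eq_iff field_simps) (metis add.commute add_eq_0_iff2 mult.commute)
    then show False using assms(1) by (metis vec.span_base vec.span_scale singletonI)
  qed
  then show ?thesis using assms by simp
qed

definition Fset :: "('m::finite \<Rightarrow> complex^'n^'n) \<Rightarrow> complex^'n \<Rightarrow> (complex^'n) set" where
  "Fset Q P = {x. x \<noteq> 0 \<and> x \<notin> base_cone Q \<and> vec.span {qmap Q x} = vec.span {qmap Q P}}"

lemma fibre_Fset: "fibre Q P = zar_closure (Fset Q P)"
  by (simp add: fibre_def Fset_def)

lemma closure_sub: "S \<subseteq> zar_closure S"
  by (auto simp: zar_closure_def)

lemma zar_closureD: "x \<in> zar_closure S \<Longrightarrow> hom_poly d f \<Longrightarrow> (\<And>y. y \<in> S \<Longrightarrow> f y = 0) \<Longrightarrow> f x = 0"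
  by (auto simp: zar_closure_def)

lemma key:
  assumes P: "P \<notin> base_cone Q" and x: "x \<in> zar_closure (Fset Q P)" "x \<notin> base_cone Q"
  shows "x \<in> Fset Q P"
proof -
  define w where "w = qmap Q P"
  have w0: "w \<noteq> 0" using P by (simp add: w_def base_cone_iff)
  then obtain l where l: "w $ l \<noteq> 0" by (metis vec_eq_iff zero_index)
  have eq: "qf (Q k) x * w$l = w$k * qf (Q l) x" for k
  proof -
    let ?f = "\<lambda>y. w$l * qf (Q k) y + (- w$k) * qf (Q l) y"
    have hp: "hom_poly 2 ?f" by (intro hom_poly_add hom_poly_scale hom_poly_qf)
    have "?f y = 0" if y: "y \<in> Fset Q P" for y
    proof -
      have "qmap Q y \<noteq> 0" using y by (simp add: Fset_def base_cone_iff)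
      with y w0 obtain c where "qmap Q y = c *s w" by (auto simp: Fset_def span_sing_eq w_def)
      then have "qf (Q j) y = c * w$j" for j by (metis qmap_nth vector_smult_component)
      then show ?thesis by (simp add: algebra_simps)
    qed
    then have "?f x = 0" using zar_closureD[OF x(1) hp] by blast
    then show ?thesis by (simp add: algebra_simps)
  qed
  define c where "c = qf (Q l) x / w$l"
  have qx: "qmap Q x = c *s w"
    unfolding vec_eq_iff using eq l by (auto simp: c_def field_simps)
  have "qmap Q x \<noteq> 0" using x(2) by (simp add: base_cone_iff)
  then have "c \<noteq> 0" using qx by auto
  then have "vec.span {qmap Q x} = vec.span {qmap Q P}" using qx span_scale_eq w_def by metis
  moreover have "x \<noteq> 0" using x(2) by auto
  ultimately show ?thesis using x(2) by (simp add: Fset_def)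
qed



lemma indep_pair:
  assumes "(a::'a::field^'k) \<noteq> 0" "b \<notin> vec.span {a}"
  shows "vec.independent {a, b}" "a \<noteq> b"
proof -
  show "a \<noteq> b" using assms(2) by (metis insertI1 vec.span_base)
  have "b \<noteq> 0" using assms(2) vec.span_zero by metis
  then have "vec.independent {b}" by (simp add: vec.independent_insert)
  moreover have "a \<notin> vec.span {b}"
  proof
    assume "a \<in> vec.span {b}"
    then obtain k where k: "a = k *s b" by (auto simp: vec.span_singleton)
    then have "k \<noteq> 0" using assms(1) by auto
    then have "b = (1/k) *s a" using k by (simp add: vector_smult_assoc)
    then show False using assms(2) by (metis insertI1 vec.span_base vec.span_scale)
  qed
  ultimately show "vec.independent {a, b}" by (rule vec.independent_insertI[rotated])
qed

lemma dim_pair: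
  assumes "(a::'a::field^'k) \<noteq> 0" "b \<notin> vec.span {a}"
  shows "vec.dim (vec.span {a, b}) = 2"
  using indep_pair[OF assms] by (simp add: vec.dim_eq_card_independent)

lemma line_basis:
  assumes "is_line L"
  obtains u v where "u \<noteq> 0" "v \<notin> vec.span {u}" "L = vec.span {u, v}"
proof -
  obtain B where B: "B \<subseteq> L" "vec.independent B" "L \<subseteq> vec.span B" "card B = vec.dim L"
    using vec.basis_exists by blast
  have "card B = 2" using B(4) assms by (simp add: is_line_def)
  then obtain u v where uv: "B = {u, v}" "u \<noteq> v" by (meson card_2_iff)
  have "vec.span B \<subseteq> L" using B(1) assms by (simp add: is_line_def vec.span_minimal)
  then have L: "L = vec.span {u, v}" using B(3) uv by auto
  have u0: "u \<noteq> 0" using B(2) uv vec.dependent_zero by blast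
  have "v \<notin> vec.span {u}"
  proof
    assume "v \<in> vec.span {u}"
    moreover have "{u, v} - {v} = {u}" using uv(2) by auto
    ultimately have "vec.dependent {u, v}" unfolding vec.dependent_def by auto
    then show False using B(2) uv by simp
  qed
  then show ?thesis using that u0 L by blast
qed

lemma W_empty_if_linear:
  assumes lin: "\<forall>P. P \<noteq> 0 \<and> P \<notin> base_cone Q \<longrightarrow> vec.subspace (fibre Q P)"
    and LW: "L \<in> W_lines Q"
  shows False
proof -
  have line: "is_line L" and hL: "\<And>x. x \<in> L \<Longrightarrow> x \<in> base_cone Q \<Longrightarrow> x = 0"
    and dc: "double_cover_line Q L" using LW by (auto simp: W_lines_def)
  obtain u v where u0: "u \<noteq> 0" and vu: "v \<notin> vec.span {u}" and L: "L = vec.span {u, v}"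
    using line_basis[OF line] .
  define A where "A = qmap Q u"
  define C where "C = qmap Q v"
  define B where "B = bv Q u v"
  have qL: "qmap Q (s *s u + t *s v) = s^2 *s A + (s*t) *s B + t^2 *s C" for s t
    by (simp add: A_def B_def C_def qmap_lin)
  have inL: "s *s u + t *s v \<in> L" for s t using L span2 by blast
  have nz: "s *s u + t *s v \<noteq> 0" if "s \<noteq> 0 \<or> t \<noteq> 0" for s t
    using indep2[OF vu u0] that by blast
  have uL: "u \<in> L" and vL: "v \<in> L" using L by (auto intro: vec.span_base)
  have A0: "A \<noteq> 0" using hL[OF uL] u0 by (auto simp: A_def base_cone_iff)
  have v0: "v \<noteq> 0" using vu vec.span_zero by metis
  have C0: "C \<noteq> 0" using hL[OF vL] v0 by (auto simp: C_def base_cone_iff)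
  define SI where "SI = vec.span (qmap Q ` L)"
  have dim2: "vec.dim SI = 2" using dc by (simp add: double_cover_line_def SI_def)
  have ASI: "A \<in> SI" and CSI: "C \<in> SI" using uL vL by (auto simp: SI_def A_def C_def intro: vec.span_base)
  have "1 *s u + 1 *s v \<in> L" by (rule inL)
  then have "qmap Q (1 *s u + 1 *s v) \<in> SI" unfolding SI_def by (intro vec.span_base imageI)
  then have "A + B + C \<in> SI" using qL[of 1 1] by simp
  then have BSI: "B \<in> SI" using ASI CSI
    by (metis add_diff_cancel_left' add_diff_cancel_right' vec.span_diff SI_def vec.span_span)
  have "\<exists>p q. p \<notin> base_cone Q \<and> q \<in> Fset Q p \<and> u \<in> vec.span {p, q} \<and> v \<in> vec.span {p, q}"
  proof (cases "C \<in> vec.span {A}")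
    case True
    then obtain c where c: "C = c *s A" by (auto simp: vec.span_singleton)
    then have "c \<noteq> 0" using C0 by auto
    then have "vec.span {qmap Q v} = vec.span {qmap Q u}"
      using c span_scale_eq by (metis A_def C_def)
    moreover have "u \<notin> base_cone Q" "v \<notin> base_cone Q" using A0 C0 by (auto simp: A_def C_def base_cone_iff)
    ultimately show ?thesis using v0 by (intro exI[of _ u] exI[of _ v]) (auto simp: Fset_def intro: vec.span_base)
  next
    case False
    have "vec.span {A, C} = SI"
    proof (rule vec.subspace_dim_equal)
      show "vec.subspace (vec.span {A, C})" by simp
      show "vec.subspace SI" by (simp add: SI_def)
      show "vec.span {A, C} \<subseteq> SI" using ASI CSI by (simp add: SI_def vec.span_minimal)
      show "vec.dim SI \<le> vec.dim (vec.span {A, C})" using dim2 dim_pair[OF A0 False] by simp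
    qed
    then obtain x y where Bxy: "B = x *s A + y *s C" using BSI span2 by blast
    show ?thesis
    proof (cases "y = 0")
      case False
      define q where "q = 1 *s u + (- y) *s v"
      have qq: "qmap Q q = (1 - x*y) *s A"
        unfolding q_def qL Bxy by (simp add: vec_eq_iff algebra_simps power2_eq_square)
      have q0: "q \<noteq> 0" unfolding q_def by (rule nz) simp
      have "1 - x*y \<noteq> 0"
      proof
        assume "1 - x*y = 0"
        then have "q \<in> base_cone Q" using qq by (simp add: base_cone_iff)
        then show False using hL[OF inL] q0 q_def by blast
      qed
      then have ne: "(1 - x*y) *s A \<noteq> 0" using A0 by (simp add: vec_eq_iff)
      have "q \<notin> base_cone Q" using qq ne by (simp only: base_cone_iff) simp
      moreover have "vec.span {qmap Q q} = vec.span {qmap Q u}"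
        using qq span_scale_eq[OF \<open>1 - x*y \<noteq> 0\<close>, of A] A_def by simp
      moreover have "u \<notin> base_cone Q" using A0 by (simp add: A_def base_cone_iff)
      moreover have "v \<in> vec.span {u, q}"
      proof -
        have "v = (1/y) *s u + (-1/y) *s q" using False
          by (simp add: q_def vec_eq_iff field_simps)
        then show ?thesis using span2 by blast
      qed
      ultimately show ?thesis using q0
        by (intro exI[of _ u] exI[of _ q]) (auto simp: Fset_def intro: vec.span_base)
    next
      case y0: True
      show ?thesis
      proof (cases "x = 0")
        case False
        define q where "q = (- x) *s u + 1 *s v"
        have qq: "qmap Q q = C"
          unfolding q_def qL Bxy using y0 by (simp add: vec_eq_iff algebra_simps power2_eq_square)
        have q0: "q \<noteq> 0" unfolding q_def by (rule nz) simp
        have "q \<notin> base_cone Q" "v \<notin> base_cone Q"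
          using qq C0 by (auto simp: base_cone_iff C_def)
        moreover have "vec.span {qmap Q q} = vec.span {qmap Q v}" using qq C_def by simp
        moreover have "u \<in> vec.span {v, q}"
        proof -
          have "u = (1/x) *s v + (-1/x) *s q" using False
            by (simp add: q_def vec_eq_iff field_simps)
          then show ?thesis using span2 by blast
        qed
        ultimately show ?thesis using q0
          by (intro exI[of _ v] exI[of _ q]) (auto simp: Fset_def intro: vec.span_base)
      next
        case x0: True
        define p where "p = 1 *s u + 1 *s v"
        define q where "q = 1 *s u + (-1) *s v"
        have pp: "qmap Q p = A + C"
          unfolding p_def qL Bxy using x0 y0 by (simp add: vec_eq_iff)
        have qq: "qmap Q q = A + C"
          unfolding q_def qL Bxy using x0 y0 by (simp add: vec_eq_iff)
        have AC: "A + C \<noteq> 0"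
        proof
          assume "A + C = 0"
          then have "C = (-1) *s A" by (simp add: vec_eq_iff add_eq_0_iff)
          then show False using \<open>C \<notin> vec.span {A}\<close> by (metis singletonI vec.span_base vec.span_scale)
        qed
        have q0: "q \<noteq> 0" unfolding q_def by (rule nz) simp
        have "p \<notin> base_cone Q" "q \<notin> base_cone Q" using pp qq AC by (auto simp: base_cone_iff)
        moreover have "u \<in> vec.span {p, q}"
        proof -
          have "u = (1/2) *s p + (1/2) *s q" by (simp add: p_def q_def vec_eq_iff field_simps)
          then show ?thesis using span2 by blast
        qed
        moreover have "v \<in> vec.span {p, q}"
        proof -
          have "v = (1/2) *s p + (-1/2) *s q" by (simp add: p_def q_def vec_eq_iff field_simps)
          then show ?thesis using span2 by blast
        qed
        ultimately show ?thesis using q0 pp qq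
          by (intro exI[of _ p] exI[of _ q]) (auto simp: Fset_def)
      qed
    qed
  qed
  then obtain p q where p: "p \<notin> base_cone Q" and q: "q \<in> Fset Q p"
    and up: "u \<in> vec.span {p, q}" and vp: "v \<in> vec.span {p, q}" by blast
  have p0: "p \<noteq> 0" using p by auto
  have sub: "vec.subspace (fibre Q p)" using lin p p0 by blast
  have "p \<in> Fset Q p" using p p0 by (simp add: Fset_def)
  then have "p \<in> fibre Q p" "q \<in> fibre Q p" using q closure_sub fibre_Fset by blast+
  then have "vec.span {p, q} \<subseteq> fibre Q p" using sub by (simp add: vec.span_minimal)
  moreover have "L \<subseteq> vec.span {p, q}" using up vp L by (simp add: vec.span_minimal)
  ultimately have Lf: "L \<subseteq> fibre Q p" by blast
  have "qmap Q ` L \<subseteq> vec.span {qmap Q p}"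
  proof
    fix z assume "z \<in> qmap Q ` L"
    then obtain x where x: "x \<in> L" "z = qmap Q x" by blast
    show "z \<in> vec.span {qmap Q p}"
    proof (cases "x = 0")
      case True then show ?thesis using x by (simp add: vec.span_zero)
    next
      case False
      then have "x \<notin> base_cone Q" using hL x by blast
      then have "x \<in> Fset Q p" using key[OF p] Lf x fibre_Fset by blast
      then have "vec.span {qmap Q x} = vec.span {qmap Q p}" by (simp add: Fset_def)
      then show ?thesis using x by (metis insertI1 vec.span_base)
    qed
  qed
  then have "SI \<subseteq> vec.span {qmap Q p}" by (simp add: SI_def vec.span_minimal)
  then have "vec.dim SI \<le> vec.dim (vec.span {qmap Q p})" by (rule vec.dim_subset)
  also have "\<dots> \<le> 1" by simp
  finally show False using dim2 by simp
qed



lemma proj_pts_two: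
  assumes "p1 \<in> S" "p2 \<in> S" "p1 \<noteq> 0" "p2 \<noteq> 0"
    "\<And>x. x \<in> S \<Longrightarrow> x \<noteq> 0 \<Longrightarrow> vec.span {x} = vec.span {p1} \<or> vec.span {x} = vec.span {p2}"
  shows "proj_pts S = {vec.span {p1}, vec.span {p2}}"
  using assms unfolding proj_pts_def by blast

lemma coeff_eq:
  assumes "(A::'a::field^'k) \<noteq> 0" "B \<notin> vec.span {A}" "a *s A + b *s B = a' *s A + b' *s B"
  shows "a = a' \<and> b = b'"
proof -
  have "(a - a') *s A + (b - b') *s B = 0" using assms(3)
    by (simp add: vec_eq_iff algebra_simps)
  from indep2[OF assms(2,1) this] show ?thesis by simp
qed

lemma quad_root: "(r::complex) = (-b + csqrt (b^2 - 4*c)) / 2 \<Longrightarrow> r^2 + b*r + c = 0"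
proof -
  assume r: "r = (-b + csqrt (b^2 - 4*c)) / 2"
  define D where "D = csqrt (b^2 - 4*c)"
  have D2: "D^2 = b^2 - 4*c" by (simp add: D_def)
  have "r^2 + b*r + c = (D^2 - (b^2 - 4*c)) / 4" unfolding r D_def[symmetric]
    by (simp add: field_simps power2_eq_square)
  then show ?thesis using D2 by simp
qed

lemma DC:
  fixes Q :: "'m::finite \<Rightarrow> complex^'n^'n"
  assumes u0: "u \<noteq> 0" and vu: "v \<notin> vec.span {u}" and A0: "qmap Q u \<noteq> 0"
    and c0: "c \<noteq> 0" and Cc: "qmap Q v = c *s qmap Q u"
    and hL: "\<And>s t. s \<noteq> 0 \<or> t \<noteq> 0 \<Longrightarrow> s *s u + t *s v \<notin> base_cone Q"
  shows "double_cover_line Q (vec.span {u, v})"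
proof -
  define L where "L = vec.span {u, v}"
  define A where "A = qmap Q u"
  define B where "B = bv Q u v"
  have qL: "qmap Q (s *s u + t *s v) = (s^2 + c * t^2) *s A + (s*t) *s B" for s t
    using Cc by (simp add: A_def B_def qmap_lin vec_eq_iff algebra_simps)
  have inL: "s *s u + t *s v \<in> L" for s t using L_def span2 by blast
  have Ldec: "\<exists>s t. x = s *s u + t *s v" if "x \<in> L" for x using that L_def span2 by blast
  have nz: "s *s u + t *s v \<noteq> 0" if "s \<noteq> 0 \<or> t \<noteq> 0" for s t
    using indep2[OF vu u0] that by blast
  have A0': "A \<noteq> 0" using A0 A_def by simp
  have BA: "B \<notin> vec.span {A}"
  proof
    assume "B \<in> vec.span {A}"
    then obtain b where b: "B = b *s A" by (auto simp: vec.span_singleton)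
    define r where "r = (-b + csqrt (b^2 - 4*c)) / 2"
    have "r^2 + b*r + c = 0" using quad_root r_def by blast
    moreover have "qmap Q (r *s u + 1 *s v) = (r^2 + b*r + c) *s A" unfolding qL b
      by (simp add: vec_eq_iff algebra_simps)
    ultimately have "qmap Q (r *s u + 1 *s v) = 0" by simp
    then show False using hL[of r 1] by (simp add: base_cone_iff)
  qed
  have ceq: "a = a' \<and> b = b'" if "a *s A + b *s B = a' *s A + b' *s B" for a b a' b'
    using coeff_eq[OF A0' BA that] .
  have SI: "vec.span (qmap Q ` L) = vec.span {A, B}"
  proof
    have "qmap Q ` L \<subseteq> vec.span {A, B}"
    proof
      fix z assume "z \<in> qmap Q ` L"
      then obtain x where "x \<in> L" "z = qmap Q x" by blast
      then obtain s t where "z = qmap Q (s *s u + t *s v)" using Ldec by metis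
      then show "z \<in> vec.span {A, B}" unfolding qL using span2 by blast
    qed
    then show "vec.span (qmap Q ` L) \<subseteq> vec.span {A, B}" by (simp add: vec.span_minimal)
  next
    have a: "A \<in> vec.span (qmap Q ` L)" using inL[of 1 0] by (auto simp: A_def intro!: vec.span_base)
    have "qmap Q (1 *s u + 1 *s v) \<in> vec.span (qmap Q ` L)" using inL by (intro vec.span_base imageI)
    then have "(1 + c) *s A + B \<in> vec.span (qmap Q ` L)" unfolding qL by simp
    then have "(1 + c) *s A + B - (1 + c) *s A \<in> vec.span (qmap Q ` L)"
      using a by (intro vec.span_diff vec.span_scale)
    then have "B \<in> vec.span (qmap Q ` L)" by simp
    then show "vec.span {A, B} \<subseteq> vec.span (qmap Q ` L)" using a by (simp add: vec.span_minimal)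
  qed
  have dim: "vec.dim (vec.span (qmap Q ` L)) = 2" unfolding SI by (rule dim_pair[OF A0' BA])
  define r where "r = csqrt c"
  define Y1 where "Y1 = vec.span {(2*r) *s A + B}"
  define Y2 where "Y2 = vec.span {(-2*r) *s A + B}"
  have card2: "card (proj_pts {x \<in> L. x \<noteq> 0 \<and> vec.span {qmap Q x} = y}) = 2"
    if y: "y \<in> proj_pts (qmap Q ` L)" "y \<noteq> Y1" "y \<noteq> Y2" for y
  proof -
    define S where "S = {x \<in> L. x \<noteq> 0 \<and> vec.span {qmap Q x} = y}"
    obtain z where z: "z \<in> qmap Q ` L" "z \<noteq> 0" "y = vec.span {z}" using y(1) by (auto simp: proj_pts_def)
    then obtain s0 t0 where "z = qmap Q (s0 *s u + t0 *s v)" using Ldec by blast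
    then obtain \<alpha> \<beta> where zab: "z = \<alpha> *s A + \<beta> *s B" using qL by blast
    have memS: "s *s u + t *s v \<in> S \<longleftrightarrow> (s \<noteq> 0 \<or> t \<noteq> 0) \<and> vec.span {qmap Q (s *s u + t *s v)} = y" for s t
      using inL nz by (auto simp: S_def)
    have qnz: "qmap Q (s *s u + t *s v) \<noteq> 0" if "s \<noteq> 0 \<or> t \<noteq> 0" for s t
      using hL[OF that] by (simp add: base_cone_iff)
    show ?thesis
    proof (cases "\<beta> = 0")
      case True
      then have al: "\<alpha> \<noteq> 0" using z(2) zab by simp
      have yA: "y = vec.span {A}" using z(3) zab True span_scale_eq[OF al] by simp
      have "proj_pts S = {vec.span {u}, vec.span {v}}"
      proof (rule proj_pts_two)
        have "u = 1 *s u + 0 *s v" by simp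
        moreover have "vec.span {qmap Q (1 *s u + 0 *s v)} = y" using yA A_def by simp
        ultimately show "u \<in> S" using memS[of 1 0] by simp
        have "v = 0 *s u + 1 *s v" by simp
        moreover have "vec.span {qmap Q (0 *s u + 1 *s v)} = y" using yA qL[of 0 1] span_scale_eq[OF c0] by simp
        ultimately show "v \<in> S" using memS[of 0 1] by simp
        show "u \<noteq> 0" by (rule u0)
        show "v \<noteq> 0" using vu vec.span_zero by metis
      next
        fix x assume x: "x \<in> S" "x \<noteq> 0"
        then obtain s t where xst: "x = s *s u + t *s v" using Ldec S_def by blast
        then have st: "s \<noteq> 0 \<or> t \<noteq> 0" using x(2) by auto
        have "vec.span {qmap Q x} = vec.span {A}" using x yA S_def by simp
        then obtain k where "k \<noteq> 0" "qmap Q x = k *s A" using qnz[OF st] xst A0' span_sing_eq by metis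
        then have "(s^2 + c * t^2) *s A + (s*t) *s B = k *s A + 0 *s B" using qL xst by simp
        then have st0: "s * t = 0" using ceq by blast
        show "vec.span {x} = vec.span {u} \<or> vec.span {x} = vec.span {v}"
        proof (cases "s = 0")
          case True
          then have "t \<noteq> 0" using st by simp
          then have "vec.span {x} = vec.span {v}" using xst True span_scale_eq[of t v] by simp
          then show ?thesis by blast
        next
          case False
          then have "t = 0" using st0 by simp
          then have "vec.span {x} = vec.span {u}" using xst False span_scale_eq[of s u] by simp
          then show ?thesis by blast
        qed
      qed
      moreover have "vec.span {u} \<noteq> vec.span {v}" using vu by (metis insertI1 vec.span_base)
      ultimately show ?thesis by (simp add: S_def)
    next
      case False
      define a where "a = \<alpha> / \<beta>"
      define D where "D = csqrt (a^2 - 4*c)"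
      have D2: "D^2 = a^2 - 4*c" by (simp add: D_def)
      have zb: "z = \<beta> *s (a *s A + B)" using False zab by (simp add: a_def vec_eq_iff field_simps)
      have yaB: "y = vec.span {a *s A + B}" using z(3) zb span_scale_eq[OF False, of "a *s A + B"] by (simp only:)
      have D0: "D \<noteq> 0"
      proof
        assume "D = 0"
        then have "a^2 = (2*r)^2" using D2 by (simp add: r_def power_mult_distrib)
        then have "a = 2*r \<or> a = -(2*r)" using power2_eq_iff by blast
        then show False using y(2,3) yaB by (auto simp: Y1_def Y2_def)
      qed
      define r1 where "r1 = (a + D) / 2"
      define r2 where "r2 = (a - D) / 2"
      have root: "\<sigma>^2 + c = a * \<sigma> \<longleftrightarrow> \<sigma> = r1 \<or> \<sigma> = r2" for \<sigma>
      proof -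
        have "\<sigma>^2 + c - a * \<sigma> = (\<sigma> - r1) * (\<sigma> - r2)"
          unfolding r1_def r2_def using D2 by (simp add: field_simps power2_eq_square)
        then show ?thesis by (metis eq_iff_diff_eq_0 mult_eq_0_iff)
      qed
      have r12: "r1 \<noteq> r2" using D0 by (simp add: r1_def r2_def field_simps)
      have ri_mem: "ri *s u + 1 *s v \<in> S" if "ri = r1 \<or> ri = r2" for ri
      proof -
        have e: "ri^2 + c = a * ri" using root that by blast
        have "ri \<noteq> 0" using e c0 by auto
        have "qmap Q (ri *s u + 1 *s v) = ri *s (a *s A + B)" unfolding qL using e
          by (simp add: vec_eq_iff algebra_simps)
        then have "vec.span {qmap Q (ri *s u + 1 *s v)} = y" using yaB span_scale_eq[OF \<open>ri \<noteq> 0\<close>, of "a *s A + B"] by (simp only:)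
        then show ?thesis using memS[of ri 1] by (simp only:) simp
      qed
      have "proj_pts S = {vec.span {r1 *s u + 1 *s v}, vec.span {r2 *s u + 1 *s v}}"
      proof (rule proj_pts_two)
        show "r1 *s u + 1 *s v \<in> S" "r2 *s u + 1 *s v \<in> S" using ri_mem by auto
        show "r1 *s u + 1 *s v \<noteq> 0" "r2 *s u + 1 *s v \<noteq> 0" using nz[of r1 1] nz[of r2 1] by simp_all
      next
        fix x assume x: "x \<in> S" "x \<noteq> 0"
        then obtain s t where xst: "x = s *s u + t *s v" using Ldec S_def by blast
        then have st: "s \<noteq> 0 \<or> t \<noteq> 0" using x(2) by auto
        have "vec.span {qmap Q x} = vec.span {a *s A + B}" using x yaB S_def by simp
        moreover have "a *s A + B \<noteq> 0" using z(2) zb by (metis vector_smult_rzero)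
        ultimately obtain k where k: "k \<noteq> 0" "qmap Q x = k *s (a *s A + B)"
          using qnz[OF st] xst span_sing_eq by metis
        then have "(s^2 + c * t^2) *s A + (s*t) *s B = (k * a) *s A + k *s B" using qL xst
          by (simp add: vec_eq_iff algebra_simps)
        then have e1: "s^2 + c * t^2 = k * a" and e2: "s * t = k" using ceq by blast+
        have t0: "t \<noteq> 0" using e2 k(1) by auto
        define \<sigma> where "\<sigma> = s / t"
        have "\<sigma>^2 + c = a * \<sigma>" unfolding \<sigma>_def using t0 e1 e2
          by (simp add: field_simps power2_eq_square)
        then have "\<sigma> = r1 \<or> \<sigma> = r2" using root by blast
        moreover have "x = t *s (\<sigma> *s u + 1 *s v)" using xst t0
          by (simp add: \<sigma>_def vec_eq_iff field_simps)
        ultimately have "x = t *s (r1 *s u + 1 *s v) \<or> x = t *s (r2 *s u + 1 *s v)" by blast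
        then show "vec.span {x} = vec.span {r1 *s u + 1 *s v} \<or> vec.span {x} = vec.span {r2 *s u + 1 *s v}"
          using span_scale_eq[OF t0, of "r1 *s u + 1 *s v"] span_scale_eq[OF t0, of "r2 *s u + 1 *s v"] by metis
      qed
      moreover have "vec.span {r1 *s u + 1 *s v} \<noteq> vec.span {r2 *s u + 1 *s v}"
      proof
        assume "vec.span {r1 *s u + 1 *s v} = vec.span {r2 *s u + 1 *s v}"
        then obtain k where "r1 *s u + 1 *s v = k *s (r2 *s u + 1 *s v)"
          using span_sing_eq nz by (metis one_neq_zero)
        then have "(r1 - k * r2) *s u + (1 - k) *s v = 0" by (simp add: vec_eq_iff algebra_simps)
        then have "r1 - k * r2 = 0 \<and> 1 - k = 0" using indep2[OF vu u0] by blast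
        then show False using r12 by simp
      qed
      ultimately show ?thesis by (simp add: S_def)
    qed
  qed
  have "{y \<in> proj_pts (qmap Q ` L). card (proj_pts {x \<in> L. x \<noteq> 0 \<and> vec.span {qmap Q x} = y}) \<noteq> 2}
        \<subseteq> {Y1, Y2}" using card2 by auto
  then have "finite {y \<in> proj_pts (qmap Q ` L). card (proj_pts {x \<in> L. x \<noteq> 0 \<and> vec.span {qmap Q x} = y}) \<noteq> 2}"
    by (rule finite_subset) simp
  then show ?thesis using dim by (simp add: double_cover_line_def L_def)
qed



lemma solve_lin: fixes x y a b :: complex assumes "y \<noteq> 0" "x*a + y*b = 0" shows "b = (-x/y)*a"
proof -
  have "y*b = -(x*a)" using assms(2) by (simp add: eq_neg_iff_add_eq_0 add.commute)
  then show ?thesis using assms(1) by (simp add: field_simps)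
qed

lemma LL:
  fixes Q :: "'m::finite \<Rightarrow> complex^'n^'n"
  assumes W: "W_lines Q = {}" and u: "u \<in> Fset Q P" and v: "v \<in> Fset Q P"
    and vu: "v \<notin> vec.span {u}" and w: "s *s u + t *s v \<notin> base_cone Q"
  shows "s *s u + t *s v \<in> Fset Q P"
proof -
  have u0: "u \<noteq> 0" and uX: "u \<notin> base_cone Q" using u by (auto simp: Fset_def)
  have vX: "v \<notin> base_cone Q" using v by (auto simp: Fset_def)
  define A where "A = qmap Q u"
  define B where "B = bv Q u v"
  have A0: "A \<noteq> 0" using uX by (simp add: A_def base_cone_iff)
  have C0: "qmap Q v \<noteq> 0" using vX by (simp add: base_cone_iff)
  have "vec.span {qmap Q v} = vec.span {qmap Q u}" using u v by (simp add: Fset_def)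
  moreover have "qmap Q u \<noteq> 0" using A0 A_def by simp
  ultimately have "\<exists>c. c \<noteq> 0 \<and> qmap Q v = c *s qmap Q u" using span_sing_eq[OF C0] by blast
  then obtain c where c0: "c \<noteq> 0" and Cc: "qmap Q v = c *s qmap Q u" by blast
  have qL: "qmap Q (s *s u + t *s v) = (s^2 + c * t^2) *s A + (s*t) *s B" for s t
    using Cc by (simp add: A_def B_def qmap_lin vec_eq_iff algebra_simps)
  have nz: "s *s u + t *s v \<noteq> 0" if "s \<noteq> 0 \<or> t \<noteq> 0" for s t
    using indep2[OF vu u0] that by blast
  have "\<exists>s0 t0. (s0 \<noteq> 0 \<or> t0 \<noteq> 0) \<and> s0 *s u + t0 *s v \<in> base_cone Q"
  proof (rule ccontr)
    assume "\<not> ?thesis"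
    then have hL: "\<And>s t. s \<noteq> 0 \<or> t \<noteq> 0 \<Longrightarrow> s *s u + t *s v \<notin> base_cone Q" by blast
    have dc: "double_cover_line Q (vec.span {u, v})"
      using DC[OF u0 vu _ c0 Cc hL] A0 A_def by blast
    have il: "is_line (vec.span {u, v})" using dim_pair[OF u0 vu] by (simp add: is_line_def)
    have "vec.span {u, v} \<inter> base_cone Q = {0}"
    proof
      show "vec.span {u, v} \<inter> base_cone Q \<subseteq> {0}"
      proof
        fix x assume x: "x \<in> vec.span {u, v} \<inter> base_cone Q"
        then obtain s t where xst: "x = s *s u + t *s v" using span2[of x u v] by blast
        moreover have "\<not> (s \<noteq> 0 \<or> t \<noteq> 0)"
        proof
          assume "s \<noteq> 0 \<or> t \<noteq> 0"
          from hL[OF this] x xst show False by blast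
        qed
        ultimately show "x \<in> {0}" by simp
      qed
      show "{0} \<subseteq> vec.span {u, v} \<inter> base_cone Q" by (simp add: vec.span_zero)
    qed
    then have "vec.span {u, v} \<in> W_lines Q" using il dc by (simp add: W_lines_def)
    then show False using W by simp
  qed
  then obtain s0 t0 where st0: "s0 \<noteq> 0 \<or> t0 \<noteq> 0" and X0: "s0 *s u + t0 *s v \<in> base_cone Q" by blast
  have e0: "(s0^2 + c * t0^2) *s A + (s0*t0) *s B = 0" using X0 qL by (simp add: base_cone_iff)
  obtain b where Bb: "B = b *s A"
  proof (cases "s0 * t0 = 0")
    case True
    then have "(s0^2 + c * t0^2) *s A = 0" using e0 by (simp only: True vector_smult_lzero add_0_right)
    then have "s0^2 + c * t0^2 = 0" using A0 by (metis vector_mul_eq_0)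
    have False
    proof (cases "s0 = 0")
      case True
      then have "t0 \<noteq> 0" using st0 by simp
      then show False using \<open>s0^2 + c * t0^2 = 0\<close> True c0 by simp
    next
      case False
      then have "t0 = 0" using \<open>s0 * t0 = 0\<close> by simp
      then show False using \<open>s0^2 + c * t0^2 = 0\<close> False by simp
    qed
    then show ?thesis by blast
  next
    case False
    have "B = (- (s0^2 + c * t0^2) / (s0 * t0)) *s A"
    proof (subst vec_eq_iff, intro allI)
      fix i
      have "((s0^2 + c * t0^2) *s A + (s0*t0) *s B) $ i = (0::complex^'m) $ i" using e0 by simp
      then have "(s0^2 + c * t0^2) * A$i + (s0*t0) * B$i = 0"
        by (simp only: vector_add_component vector_smult_component zero_index)
      then show "B $ i = ((- (s0^2 + c * t0^2) / (s0 * t0)) *s A) $ i"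
        using solve_lin[OF False] by (simp only: vector_smult_component)
    qed
    then show ?thesis using that by blast
  qed
  define k where "k = s^2 + c * t^2 + s * t * b"
  have qw: "qmap Q (s *s u + t *s v) = k *s A" unfolding qL Bb k_def by (simp add: vec_eq_iff algebra_simps)
  have "k \<noteq> 0" using w qw by (auto simp: base_cone_iff)
  then have "vec.span {qmap Q (s *s u + t *s v)} = vec.span {qmap Q u}"
    using qw span_scale_eq[of k A] A_def by simp
  also have "\<dots> = vec.span {qmap Q P}" using u by (simp add: Fset_def)
  finally have "vec.span {qmap Q (s *s u + t *s v)} = vec.span {qmap Q P}" .
  moreover have "s *s u + t *s v \<noteq> 0" using w by auto
  ultimately show ?thesis using w by (simp add: Fset_def)
qed

lemma LF:
  fixes Q :: "'m::finite \<Rightarrow> complex^'n^'n"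
  assumes W: "W_lines Q = {}" and u: "u \<in> Fset Q P" and b: "b \<in> Fset Q P"
    and f: "hom_poly d f" "\<And>y. y \<in> Fset Q P \<Longrightarrow> f y = 0"
  shows "f (u + t *s b) = 0"
proof (cases "b \<in> vec.span {u}")
  case True
  then obtain k where "b = k *s u" by (auto simp: vec.span_singleton)
  then have eq: "u + t *s b = (1 + t * k) *s u" by (simp add: vec_eq_iff algebra_simps)
  have "f (u + t *s b) = f ((1 + t * k) *s u)" using eq by simp
  also have "\<dots> = (1 + t * k)^d * f u" by (rule hom_poly_hom[OF f(1)])
  also have "\<dots> = 0" using f(2)[OF u] by simp
  finally show ?thesis .
next
  case False
  have uX: "u \<notin> base_cone Q" using u by (simp add: Fset_def)
  show ?thesis
  proof (rule hom_poly_dense[OF f(1) finite_line_base[OF uX]])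
    fix s assume "s \<notin> {s. u + t *s b + s *s u \<in> base_cone Q}"
    then have nb: "(1 + s) *s u + t *s b \<notin> base_cone Q"
      by (simp add: algebra_simps vector_sadd_rdistrib)
    have "(1 + s) *s u + t *s b \<in> Fset Q P" using LL[OF W u b False nb] .
    then have "f ((1 + s) *s u + t *s b) = 0" by (rule f(2))
    then show "f (u + t *s b + s *s u) = 0" by (simp add: algebra_simps vector_sadd_rdistrib)
  qed
qed

lemma span_sub:
  fixes Q :: "'m::finite \<Rightarrow> complex^'n^'n"
  assumes W: "W_lines Q = {}" and P: "P \<in> Fset Q P"
  shows "finite B \<Longrightarrow> B \<subseteq> Fset Q P \<Longrightarrow> vec.span B \<subseteq> zar_closure (Fset Q P)"
proof (induction B rule: finite_induct)
  case empty
  show ?case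
  proof
    fix x :: "complex^'n" assume "x \<in> vec.span {}"
    then have x0: "x = 0" by simp
    show "x \<in> zar_closure (Fset Q P)" unfolding zar_closure_def x0
      using hom_poly_at0 P by blast
  qed
next
  case (insert b B)
  have bF: "b \<in> Fset Q P" and BF: "B \<subseteq> Fset Q P" using insert.prems by auto
  have IH: "vec.span B \<subseteq> zar_closure (Fset Q P)" using insert.IH BF by blast
  show ?case
  proof
    fix x :: "complex^'n" assume "x \<in> vec.span (insert b B)"
    then obtain k where uB: "x - k *s b \<in> vec.span B" by (auto simp: vec.span_insert)
    define u where "u = x - k *s b"
    have xu: "x = u + k *s b" by (simp add: u_def)
    show "x \<in> zar_closure (Fset Q P)" unfolding zar_closure_def
    proof (intro CollectI allI impI, elim conjE)
      fix d f assume f: "hom_poly d f" "\<forall>y\<in>Fset Q P. f y = 0"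
      show "f x = 0"
      proof (cases "B = {}")
        case True
        then have "u = 0" using uB u_def by simp
        then show ?thesis using xu hom_poly_hom[OF f(1), of k b] f(2) bF by simp
      next
        case False
        then obtain b0 where b0: "b0 \<in> B" by blast
        then have b0X: "b0 \<notin> base_cone Q" using BF by (auto simp: Fset_def)
        show ?thesis
        proof (rule hom_poly_dense[OF f(1) finite_line_base[OF b0X, of u]])
          fix s assume s: "s \<notin> {s. u + s *s b0 \<in> base_cone Q}"
          have "u \<in> vec.span B" using uB u_def by simp
          moreover have "s *s b0 \<in> vec.span B" using b0 by (intro vec.span_scale vec.span_base)
          ultimately have "u + s *s b0 \<in> vec.span B" by (rule vec.span_add)
          then have "u + s *s b0 \<in> zar_closure (Fset Q P)" using IH by blast
          moreover have "u + s *s b0 \<notin> base_cone Q" using s by simp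
          moreover have PX: "P \<notin> base_cone Q" using P by (simp add: Fset_def)
          ultimately have uF: "u + s *s b0 \<in> Fset Q P" using key by blast
          have f2: "\<And>y. y \<in> Fset Q P \<Longrightarrow> f y = 0" using f(2) by blast
          have "f ((u + s *s b0) + k *s b) = 0" by (rule LF[OF W uF bF f(1) f2])
          then show "f (x + s *s b0) = 0" using xu by (simp add: algebra_simps)
        qed
      qed
    qed
  qed
qed

lemma sep:
  fixes S :: "(complex^'n) set"
  assumes "x \<notin> vec.span S"
  shows "\<exists>g. hom_poly 1 g \<and> (\<forall>y\<in>S. g y = 0) \<and> g x \<noteq> 0"
proof -
  interpret vp: vector_space_pair "(*s) :: complex \<Rightarrow> complex^'n \<Rightarrow> complex^'n" "(*) :: complex \<Rightarrow> complex \<Rightarrow> complex"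
    by (simp add: vector_space_pair_def vec.vector_space_axioms vector_space_over_itself.vector_space_axioms)
  obtain B where B: "B \<subseteq> vec.span S" "vec.independent B" "vec.span S \<subseteq> vec.span B"
    "card B = vec.dim (vec.span S)" by (rule vec.basis_exists)
  have "vec.span B \<subseteq> vec.span S" using B(1) by (simp add: vec.span_minimal)
  then have xB: "x \<notin> vec.span B" using assms B(3) by blast
  then have ind: "vec.independent (insert x B)" using B(2) by (rule vec.independent_insertI)
  obtain g where lin: "Vector_Spaces.linear (*s) (*) g"
    and gv: "\<forall>z\<in>insert x B. g z = (if z = x then 1 else (0::complex))"
    using vp.linear_independent_extend[OF ind, of "\<lambda>z. if z = x then 1 else 0"] by blast
  have g0: "\<forall>b\<in>B. g b = 0"
  proof
    fix b assume b: "b \<in> B"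
    then have "b \<noteq> x" using xB vec.span_base by blast
    then show "g b = 0" using gv b by simp
  qed
  have gB: "g z = 0" if "z \<in> vec.span B" for z
    using vp.linear_eq_0_on_span[OF lin _ that] g0 by blast
  have gS: "\<forall>y\<in>S. g y = 0"
  proof
    fix y assume "y \<in> S"
    then have "y \<in> vec.span S" by (rule vec.span_base)
    then show "g y = 0" using gB B(3) by blast
  qed
  have "g y = (\<Sum>i\<in>UNIV. g (axis i 1) * y$i)" for y
  proof -
    have "g y = g (\<Sum>i\<in>UNIV. y$i *s axis i 1)" by (simp add: basis_expansion)
    also have "\<dots> = (\<Sum>i\<in>UNIV. g (y$i *s axis i 1))" by (rule vp.linear_sum[OF lin])
    also have "\<dots> = (\<Sum>i\<in>UNIV. g (axis i 1) * y$i)"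
      by (intro sum.cong refl) (simp add: vp.linear_scale[OF lin] mult.commute)
    finally show ?thesis .
  qed
  then have "g = (\<lambda>y. \<Sum>i\<in>UNIV. g (axis i 1) * y$i)" by blast
  moreover have "hom_poly 1 (\<lambda>y. \<Sum>i\<in>UNIV. g (axis i 1) * y$i)"
  proof (rule hom_poly_sum)
    fix i show "hom_poly 1 (\<lambda>y. g (axis i 1) * y$i)" by (rule hom_poly_scale[OF hom_poly_mono1])
  qed simp
  ultimately have "hom_poly 1 g" by simp
  then show ?thesis using gS gv by auto
qed


theorem corollary4p4:
  fixes Q :: "'m::finite \<Rightarrow> complex^'n^'n"
  assumes "qf_independent Q"
  shows "W_lines Q = {} \<longleftrightarrow>
           (\<forall>P. P \<noteq> 0 \<and> P \<notin> base_cone Q \<longrightarrow> vec.subspace (fibre Q P))"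
proof
  assume W: "W_lines Q = {}"
  show "\<forall>P. P \<noteq> 0 \<and> P \<notin> base_cone Q \<longrightarrow> vec.subspace (fibre Q P)"
  proof (intro allI impI, elim conjE)
    fix P :: "complex^'n" assume P0: "P \<noteq> 0" and PX: "P \<notin> base_cone Q"
    have PF: "P \<in> Fset Q P" using P0 PX by (simp add: Fset_def)
    have "fibre Q P = vec.span (Fset Q P)"
    proof
      obtain B where B: "B \<subseteq> Fset Q P" "vec.independent B" "Fset Q P \<subseteq> vec.span B"
        "card B = vec.dim (Fset Q P)" by (rule vec.basis_exists)
      have fB: "finite B" using B(2) by (rule vec.finiteI_independent)
      have "vec.span B \<subseteq> zar_closure (Fset Q P)" using span_sub[OF W PF fB B(1)] .
      moreover have "vec.span (Fset Q P) \<subseteq> vec.span B" using B(3) by (simp add: vec.span_minimal)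
      ultimately show "vec.span (Fset Q P) \<subseteq> fibre Q P" unfolding fibre_Fset by (rule order_trans[rotated])
    next
      show "fibre Q P \<subseteq> vec.span (Fset Q P)"
      proof
        fix x assume x: "x \<in> fibre Q P"
        show "x \<in> vec.span (Fset Q P)"
        proof (rule ccontr)
          assume "x \<notin> vec.span (Fset Q P)"
          then obtain g where g: "hom_poly 1 g" "\<forall>y\<in>Fset Q P. g y = 0" "g x \<noteq> 0"
            using sep by blast
          have xz: "x \<in> zar_closure (Fset Q P)" using x by (simp only: fibre_Fset)
          have "g x = 0" using zar_closureD[OF xz g(1)] g(2) by blast
          then show False using g(3) by simp
        qed
      qed
    qed
    then show "vec.subspace (fibre Q P)" by simp
  qed
next
  assume lin: "\<forall>P. P \<noteq> 0 \<and> P \<notin> base_cone Q \<longrightarrow> vec.subspace (fibre Q P)"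
  show "W_lines Q = {}" using W_empty_if_linear[OF lin] by blast
qed

end
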